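(* Consider observations $y_i = y(t_i) = F(x_0)(t_i) + \epsilon_i$, $i=1,\dots,n$, where $F:\mathbf X\to\mathbf Y$ is a known linear operator between Hilbert spaces of real functions, $t_1,\dots,t_n$ is a fixed design, and $\epsilon_1,\dots,\epsilon_n$ are independent with zero mean, finite variance, and satisfying: there is $K<\infty$ with $\max_{i}\mathbf E\exp[\epsilon_i^2/K^2]\le K$. Let $(\lambda_j;\varphi_j,\psi_j)_{j=1,\dots,n}$ be a singular system of $F$ as in the context, and assume $F$ has index of ill-posedness $t>0$, i.e. $\lambda_j=O(j^{-t})$. Let $c>0$ be the constant (depending on $K$) for which $\mathbf P(\max_j|\frac1n\sum_i\varphi_j(t_i)\epsilon_i|>c\sqrt{\log n/n})\le c\exp[-\log n/c^2]$, set $\mu_j=\frac{2c}{\lambda_j}\sqrt{\frac{\log n}{n}}$, and let $$\hat x_n=\sum_{j=1}^n \hat x_j\psi_j \in \arg\min_{x=\sum_{j=1}^n x_j\psi_j}\Big[\sum_{j=1}^n\Big|\Big\langle y-F(x),\frac{\varphi_j}{\lambda_j}\Big\rangle_n\Big|^2+\sum_{j=1}^n\mu_j|x_j|\Big].$$ Assume there are $s$ and $0<p<2$ with $\frac1p=\frac12+\frac{s}{2t+1}$ such that $x_0=\sum_j x_{j,0}\psi_j$ belongs to $$X_{s,p}=\Big\{x=\sum_{j=1}^n x_j\psi_j:\ \sum_{j=1}^n j^{p(s+\frac12-\frac1p)}|x_j|^p\le1\Big\}.$$ Then $$\|\hat x_n-x_0\|_n^2=O_{\mathbf P}\Big(\Big(\frac{n}{\log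 n}\Big)^{-\frac{2s}{2s+2t+1}}\Big).$$
   Context: The empirical norm is $\|y\|_n^2=\frac1n\sum_{i=1}^n y(t_i)^2$ with empirical inner product $\langle y,z\rangle_n=\frac1n\sum_{i=1}^n y(t_i)z(t_i)$; for the data vector $y=(y_i)$, $\langle y,\varphi\rangle_n=\frac1n\sum_i y_i\varphi(t_i)$. The singular system satisfies $F\psi_j=\lambda_j\varphi_j$, $F^*\varphi_j=\lambda_j\psi_j$, where $\lambda_j^2>0$ are the nonzero eigenvalues of $F^*F$ in decreasing order, and $\{\psi_j\}$, $\{\varphi_j\}$ are complete orthonormal systems with respect to $\|\cdot\|_n$ of eigenvectors of $F^*F$ and $FF^*$; for $x=\sum_j x_j\psi_j$, $\|x\|_n^2=\sum_j x_j^2$. $O_{\mathbf P}$ denotes boundedness in probability. *)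

theory Defs
  imports "HOL-Probability.Probability"
begin

text \<open>Empirical inner product at the design points dsg n 1, ..., dsg n n
  (the n-th design of the sequence of problems).\<close>
definition emp_inner :: "(nat \<Rightarrow> nat \<Rightarrow> real) \<Rightarrow> nat \<Rightarrow> (real \<Rightarrow> real) \<Rightarrow> (real \<Rightarrow> real) \<Rightarrow> real" where
  "emp_inner dsg n u v = (\<Sum>i\<in>{1..n}. u (dsg n i) * v (dsg n i)) / real n"

definition emp_norm2 :: "(nat \<Rightarrow> nat \<Rightarrow> real) \<Rightarrow> nat \<Rightarrow> (real \<Rightarrow> real) \<Rightarrow> real" where
  "emp_norm2 dsg n u = emp_inner dsg n u u"

definition expand :: "nat \<Rightarrow> (nat \<Rightarrow> real) \<Rightarrow> (nat \<Rightarrow> real \<Rightarrow> real) \<Rightarrow> real \<Rightarrow> real" where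
  "expand n a psi = (\<lambda>z. \<Sum>j\<in>{1..n}. a j * psi j z)"

definition mu_w :: "real \<Rightarrow> nat \<Rightarrow> real \<Rightarrow> real" where
  "mu_w c n lam_j = 2 * c / lam_j * sqrt (ln (real n) / real n)"

definition crit ::
  "((real \<Rightarrow> real) \<Rightarrow> (real \<Rightarrow> real)) \<Rightarrow> (nat \<Rightarrow> nat \<Rightarrow> real) \<Rightarrow> nat \<Rightarrow>
   (nat \<Rightarrow> real \<Rightarrow> real) \<Rightarrow> (nat \<Rightarrow> real \<Rightarrow> real) \<Rightarrow> (nat \<Rightarrow> real) \<Rightarrow> real \<Rightarrow>
   (nat \<Rightarrow> real) \<Rightarrow> (nat \<Rightarrow> real) \<Rightarrow> real" where
  "crit F dsg n phi psi lam c y a =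
     (\<Sum>j\<in>{1..n}. \<bar>(\<Sum>i\<in>{1..n}. (y i - F (expand n a psi) (dsg n i)) * (phi j (dsg n i) / lam j)) / real n\<bar>\<^sup>2)
     + (\<Sum>j\<in>{1..n}. mu_w c n (lam j) * \<bar>a j\<bar>)"

text \<open>The smoothness class X_{s,p} (in coefficients w.r.t. psi_1..psi_n).\<close>
definition in_Xsp :: "real \<Rightarrow> real \<Rightarrow> nat \<Rightarrow> (nat \<Rightarrow> real) \<Rightarrow> bool" where
  "in_Xsp s p n a \<longleftrightarrow>
     (\<Sum>j\<in>{1..n}. real j powr (p * (s + 1/2 - 1/p)) * \<bar>a j\<bar> powr p) \<le> 1"

end

theory Submission imports Defs begin

lemma F_sum:
  fixes F :: "(real \<Rightarrow> real) \<Rightarrow> (real \<Rightarrow> real)"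
  assumes F_lin: "\<And>a b u v. F (\<lambda>z. a * u z + b * v z) = (\<lambda>z. a * F u z + b * F v z)"
  shows "finite S \<Longrightarrow> F (\<lambda>z. \<Sum>j\<in>S. a j * u j z) = (\<lambda>z. \<Sum>j\<in>S. a j * F (u j) z)"
proof (induction S rule: finite_induct)
  case empty
  have "F (\<lambda>z. 0 * (\<lambda>_. 0::real) z + 0 * (\<lambda>_. 0::real) z) = (\<lambda>z. 0 * F (\<lambda>_. 0) z + 0 * F (\<lambda>_. 0) z)"
    by (rule F_lin)
  then show ?case by simp
next
  case (insert x S)
  have "F (\<lambda>z. a x * u x z + 1 * (\<lambda>z. \<Sum>j\<in>S. a j * u j z) z) = (\<lambda>z. a x * F (u x) z + 1 * F (\<lambda>z. \<Sum>j\<in>S. a j * u j z) z)"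
    by (rule F_lin)
  then show ?case using insert by simp
qed

lemma soft:
  fixes x e tau ah :: real
  assumes "tau \<ge> 0" "\<bar>e\<bar> \<le> tau"
    and opt: "\<And>b. (x + e - ah)\<^sup>2 + 2*tau*\<bar>ah\<bar> \<le> (x + e - b)\<^sup>2 + 2*tau*\<bar>b\<bar>"
  shows "\<bar>ah - x\<bar> \<le> \<bar>x\<bar> \<and> \<bar>ah - x\<bar> \<le> 2*tau"
proof -
  define z where "z = x + e"
  define s where "s = (if z > tau then z - tau else if z < -tau then z + tau else 0)"
  have key: "(z - b)\<^sup>2 + 2*tau*\<bar>b\<bar> \<ge> (z - s)\<^sup>2 + 2*tau*\<bar>s\<bar> + (b - s)\<^sup>2" for b
  proof -
    have "(z - b)\<^sup>2 + 2*tau*\<bar>b\<bar> - ((z - s)\<^sup>2 + 2*tau*\<bar>s\<bar> + (b - s)\<^sup>2)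
       = 2*(b-s)*(s-z) + 2*tau*(\<bar>b\<bar> - \<bar>s\<bar>)" by (simp add: power2_eq_square algebra_simps)
    also have "\<dots> \<ge> 0"
    proof (cases "z > tau")
      case True then show ?thesis using assms(1) by (auto simp add: s_def abs_if algebra_simps mult_le_0_iff)
    next
      case False
      show ?thesis
      proof (cases "z < -tau")
        case True then show ?thesis using assms(1) by (auto simp add: s_def abs_if algebra_simps mult_le_0_iff)
      next
        case False2: False
        have "s = 0" using False False2 by (simp add: s_def)
        have "-(b*z) \<ge> - (\<bar>b\<bar>*tau)"
        proof -
          have "\<bar>b*z\<bar> \<le> \<bar>b\<bar>*tau" using False False2 by (simp add: abs_mult mult_left_mono)
          then show ?thesis by linarith
        qed
        then show ?thesis using \<open>s = 0\<close> by (simp add: algebra_simps)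
      qed
    qed
    finally show ?thesis by linarith
  qed
  have "(ah - s)\<^sup>2 \<le> 0" using key[of ah] opt[of s] unfolding z_def by linarith
  then have "ah = s" by simp
  then show ?thesis using assms(1,2) unfolding s_def z_def by (auto simp: abs_if split: if_splits)
qed


lemma inner_comp:
  fixes phi :: "nat \<Rightarrow> real \<Rightarrow> real" and lam d :: "nat \<Rightarrow> real"
  assumes phi_on: "\<And>j k. j \<in> {1..n} \<Longrightarrow> k \<in> {1..n} \<Longrightarrow>
          emp_inner dsg n (phi j) (phi k) = (if j = k then 1 else 0)"
    and lp: "lam j > 0" and j: "j \<in> {1..n}"
  shows "(\<Sum>i\<in>{1..n}. ((\<Sum>k\<in>{1..n}. d k * lam k * phi k (dsg n i)) + ep i) * (phi j (dsg n i) / lam j)) / real n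
     = d j + (\<Sum>i\<in>{1..n}. ep i * phi j (dsg n i)) / real n / lam j"
proof -
  define w where "w i = phi j (dsg n i) / lam j" for i
  have A: "(\<Sum>i\<in>{1..n}. ((\<Sum>k\<in>{1..n}. d k * lam k * phi k (dsg n i)) + ep i) * w i)
     = (\<Sum>i\<in>{1..n}. \<Sum>k\<in>{1..n}. d k * lam k * phi k (dsg n i) * w i) + (\<Sum>i\<in>{1..n}. ep i * w i)"
    by (simp add: distrib_right sum.distrib sum_distrib_right)
  also have "(\<Sum>i\<in>{1..n}. \<Sum>k\<in>{1..n}. d k * lam k * phi k (dsg n i) * w i)
     = (\<Sum>k\<in>{1..n}. \<Sum>i\<in>{1..n}. d k * lam k * phi k (dsg n i) * w i)"
    by (rule sum.swap)
  also have "\<dots> = (\<Sum>k\<in>{1..n}. d k * lam k / lam j * (\<Sum>i\<in>{1..n}. phi k (dsg n i) * phi j (dsg n i)))"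
    by (rule sum.cong) (simp_all add: sum_distrib_left w_def algebra_simps)
  finally have B: "(\<Sum>i\<in>{1..n}. ((\<Sum>k\<in>{1..n}. d k * lam k * phi k (dsg n i)) + ep i) * w i) / real n
     = (\<Sum>k\<in>{1..n}. d k * lam k / lam j * emp_inner dsg n (phi k) (phi j))
       + (\<Sum>i\<in>{1..n}. ep i * phi j (dsg n i)) / real n / lam j"
    by (simp add: emp_inner_def add_divide_distrib sum_divide_distrib w_def sum_distrib_left
       times_divide_eq_right mult.commute)
  have "(\<Sum>i\<in>{1..n}. ((\<Sum>k\<in>{1..n}. d k * lam k * phi k (dsg n i)) + ep i) * (phi j (dsg n i) / lam j)) / real n
     = (\<Sum>k\<in>{1..n}. d k * lam k / lam j * emp_inner dsg n (phi k) (phi j))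
       + (\<Sum>i\<in>{1..n}. ep i * phi j (dsg n i)) / real n / lam j"
    using B by (simp add: w_def)
  also have "(\<Sum>k\<in>{1..n}. d k * lam k / lam j * emp_inner dsg n (phi k) (phi j))
      = (\<Sum>k\<in>{1..n}. if k = j then d k * lam k / lam j else 0)"
    by (intro sum.cong refl) (simp add: phi_on[OF _ j])
  also have "\<dots> = d j" using j lp by (simp add: sum.delta)
  finally show ?thesis .
qed

lemma crit_sep:
  fixes F :: "(real \<Rightarrow> real) \<Rightarrow> (real \<Rightarrow> real)"
    and phi psi :: "nat \<Rightarrow> real \<Rightarrow> real" and lam :: "nat \<Rightarrow> real"
  assumes F_lin: "\<And>a b u v. F (\<lambda>z. a * u z + b * v z) = (\<lambda>z. a * F u z + b * F v z)"
    and F_psi: "\<And>j. j \<in> {1..n} \<Longrightarrow> F (psi j) = (\<lambda>z. lam j * phi j z)"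
    and phi_on: "\<And>j k. j \<in> {1..n} \<Longrightarrow> k \<in> {1..n} \<Longrightarrow>
          emp_inner dsg n (phi j) (phi k) = (if j = k then 1 else 0)"
    and lam_pos: "\<And>j. j \<in> {1..n} \<Longrightarrow> lam j > 0"
  shows "crit F dsg n phi psi lam c (\<lambda>i. F (expand n x0 psi) (dsg n i) + ep i) a
     = (\<Sum>j\<in>{1..n}. (x0 j - a j + (\<Sum>i\<in>{1..n}. ep i * phi j (dsg n i)) / real n / lam j)\<^sup>2
            + mu_w c n (lam j) * \<bar>a j\<bar>)"
proof -
  have Fexp: "F (expand n b psi) = (\<lambda>z. \<Sum>j\<in>{1..n}. b j * lam j * phi j z)" for b
  proof -
    have "F (expand n b psi) = (\<lambda>z. \<Sum>j\<in>{1..n}. b j * F (psi j) z)"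
      unfolding expand_def by (rule F_sum[OF F_lin]) simp
    also have "\<dots> = (\<lambda>z. \<Sum>j\<in>{1..n}. b j * lam j * phi j z)"
      by (rule ext, rule sum.cong) (auto simp: F_psi)
    finally show ?thesis .
  qed
  have diff: "F (expand n x0 psi) (dsg n i) + ep i - F (expand n a psi) (dsg n i)
      = (\<Sum>k\<in>{1..n}. (x0 k - a k) * lam k * phi k (dsg n i)) + ep i" for i
    by (simp add: Fexp left_diff_distrib sum_subtractf)
  have "\<bar>(\<Sum>i\<in>{1..n}. (F (expand n x0 psi) (dsg n i) + ep i - F (expand n a psi) (dsg n i)) * (phi j (dsg n i) / lam j)) / real n\<bar>\<^sup>2
     = (x0 j - a j + (\<Sum>i\<in>{1..n}. ep i * phi j (dsg n i)) / real n / lam j)\<^sup>2" if j: "j \<in> {1..n}" for j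
    unfolding diff using inner_comp[where n=n and dsg=dsg and phi=phi and lam=lam and d="\<lambda>k. x0 k - a k" and ep=ep and j=j, OF phi_on lam_pos[OF j] j] by simp
  then show ?thesis
    unfolding crit_def by (simp add: sum.distrib)
qed

lemma norm_comp:
  fixes psi :: "nat \<Rightarrow> real \<Rightarrow> real"
  assumes psi_on: "\<And>j k. j \<in> {1..n} \<Longrightarrow> k \<in> {1..n} \<Longrightarrow>
          emp_inner dsg n (psi j) (psi k) = (if j = k then 1 else 0)"
  shows "emp_norm2 dsg n (\<lambda>z. expand n a psi z - expand n b psi z) = (\<Sum>j\<in>{1..n}. (a j - b j)\<^sup>2)"
proof -
  define d where "d j = a j - b j" for j
  have e: "(\<lambda>z. expand n a psi z - expand n b psi z) = (\<lambda>z. \<Sum>j\<in>{1..n}. d j * psi j z)"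
    by (simp add: expand_def d_def left_diff_distrib sum_subtractf)
  have "emp_inner dsg n (\<lambda>z. \<Sum>j\<in>{1..n}. d j * psi j z) (\<lambda>z. \<Sum>j\<in>{1..n}. d j * psi j z)
     = (\<Sum>j\<in>{1..n}. \<Sum>k\<in>{1..n}. d j * d k * emp_inner dsg n (psi j) (psi k))"
  proof -
    have "(\<Sum>i\<in>{1..n}. (\<Sum>j\<in>{1..n}. d j * psi j (dsg n i)) * (\<Sum>k\<in>{1..n}. d k * psi k (dsg n i)))
      = (\<Sum>i\<in>{1..n}. \<Sum>j\<in>{1..n}. \<Sum>k\<in>{1..n}. d j * d k * (psi j (dsg n i) * psi k (dsg n i)))"
      by (simp add: sum_distrib_left sum_distrib_right algebra_simps)
    also have "\<dots> = (\<Sum>j\<in>{1..n}. \<Sum>i\<in>{1..n}. \<Sum>k\<in>{1..n}. d j * d k * (psi j (dsg n i) * psi k (dsg n i)))"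
      by (rule sum.swap)
    also have "\<dots> = (\<Sum>j\<in>{1..n}. \<Sum>k\<in>{1..n}. \<Sum>i\<in>{1..n}. d j * d k * (psi j (dsg n i) * psi k (dsg n i)))"
      by (rule sum.cong, simp, rule sum.swap)
    finally have X: "(\<Sum>i\<in>{1..n}. (\<Sum>j\<in>{1..n}. d j * psi j (dsg n i)) * (\<Sum>k\<in>{1..n}. d k * psi k (dsg n i)))
      = (\<Sum>j\<in>{1..n}. \<Sum>k\<in>{1..n}. \<Sum>i\<in>{1..n}. d j * d k * (psi j (dsg n i) * psi k (dsg n i)))" .
    have "(\<Sum>i\<in>{1..n}. (\<Sum>j\<in>{1..n}. d j * psi j (dsg n i)) * (\<Sum>k\<in>{1..n}. d k * psi k (dsg n i))) / real n
      = (\<Sum>j\<in>{1..n}. \<Sum>k\<in>{1..n}. d j * d k * ((\<Sum>i\<in>{1..n}. psi j (dsg n i) * psi k (dsg n i)) / real n))"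
      unfolding X by (simp add: sum_divide_distrib sum_distrib_left)
    then show ?thesis by (simp add: emp_inner_def)
  qed
  also have "\<dots> = (\<Sum>j\<in>{1..n}. d j * d j)"
  proof (rule sum.cong[OF refl])
    fix j assume j: "j \<in> {1..n}"
    have "(\<Sum>k\<in>{1..n}. d j * d k * emp_inner dsg n (psi j) (psi k)) = (\<Sum>k\<in>{1..n}. if j = k then d j * d k else 0)"
      by (intro sum.cong refl) (simp add: psi_on[OF j])
    also have "\<dots> = d j * d j" using j by (simp add: sum.delta)
    finally show "(\<Sum>k\<in>{1..n}. d j * d k * emp_inner dsg n (psi j) (psi k)) = d j * d j" .
  qed
  finally show ?thesis unfolding emp_norm2_def e by (simp add: d_def power2_eq_square)
qed


lemma term_bound:
  fixes d x T p :: real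
  assumes "\<bar>d\<bar> \<le> \<bar>x\<bar>" "\<bar>d\<bar> \<le> T" "0 < p" "p < 2"
  shows "d\<^sup>2 \<le> \<bar>x\<bar> powr p * T powr (2 - p)"
proof -
  have "d\<^sup>2 = \<bar>d\<bar> powr 2" by simp
  also have "\<dots> = \<bar>d\<bar> powr p * \<bar>d\<bar> powr (2 - p)" by (simp add: powr_add[symmetric])
  also have "\<dots> \<le> \<bar>x\<bar> powr p * T powr (2 - p)"
    using assms by (intro mult_mono powr_mono2) auto
  finally show ?thesis .
qed

lemma det_bound:
  fixes F :: "(real \<Rightarrow> real) \<Rightarrow> (real \<Rightarrow> real)"
    and phi psi :: "nat \<Rightarrow> real \<Rightarrow> real" and lam x0 xh ep :: "nat \<Rightarrow> real"
    and c C t s p :: real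
  assumes F_lin: "\<And>a b u v. F (\<lambda>z. a * u z + b * v z) = (\<lambda>z. a * F u z + b * F v z)"
    and F_psi: "\<And>j. j \<in> {1..n} \<Longrightarrow> F (psi j) = (\<lambda>z. lam j * phi j z)"
    and phi_on: "\<And>j k. j \<in> {1..n} \<Longrightarrow> k \<in> {1..n} \<Longrightarrow>
          emp_inner dsg n (phi j) (phi k) = (if j = k then 1 else 0)"
    and psi_on: "\<And>j k. j \<in> {1..n} \<Longrightarrow> k \<in> {1..n} \<Longrightarrow>
          emp_inner dsg n (psi j) (psi k) = (if j = k then 1 else 0)"
    and lam_pos: "\<And>j. j \<in> {1..n} \<Longrightarrow> lam j > 0"
    and lam_lb: "\<And>j. j \<in> {1..n} \<Longrightarrow> real j powr (-t) / C \<le> lam j"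
    and Cp: "C > 0" and cp: "c > 0" and n2: "n \<ge> 2"
    and noise: "\<And>j. j \<in> {1..n} \<Longrightarrow> \<bar>(\<Sum>i\<in>{1..n}. phi j (dsg n i) * ep i) / real n\<bar> \<le> c * sqrt (ln (real n) / real n)"
    and mn: "\<And>a. crit F dsg n phi psi lam c (\<lambda>i. F (expand n x0 psi) (dsg n i) + ep i) xh
              \<le> crit F dsg n phi psi lam c (\<lambda>i. F (expand n x0 psi) (dsg n i) + ep i) a"
    and ex: "t * (2 - p) = p * (s + 1/2 - 1/p)" and p0: "0 < p" and p2: "p < 2"
    and X: "in_Xsp s p n x0"
  shows "emp_norm2 dsg n (\<lambda>z. expand n xh psi z - expand n x0 psi z)
           \<le> (2*c*C) powr (2-p) * sqrt (ln (real n) / real n) powr (2-p)"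
proof -
  define eps where "eps = sqrt (ln (real n) / real n)"
  have eps0: "eps \<ge> 0" unfolding eps_def using n2 by (simp add: ln_ge_zero)
  define E where "E j = (\<Sum>i\<in>{1..n}. ep i * phi j (dsg n i)) / real n / lam j" for j
  define G where "G j b = (x0 j - b + E j)\<^sup>2 + mu_w c n (lam j) * \<bar>b\<bar>" for j b
  have crit_eq: "crit F dsg n phi psi lam c (\<lambda>i. F (expand n x0 psi) (dsg n i) + ep i) a
      = (\<Sum>j\<in>{1..n}. G j (a j))" for a
    unfolding G_def E_def by (rule crit_sep[OF F_lin F_psi phi_on lam_pos])
  have opt: "G j (xh j) \<le> G j b" if j: "j \<in> {1..n}" for j b
  proof -
    have "(\<Sum>k\<in>{1..n}. G k (xh k)) \<le> (\<Sum>k\<in>{1..n}. G k ((xh(j:=b)) k))"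
      using mn[of "xh(j:=b)"] unfolding crit_eq .
    moreover have "(\<Sum>k\<in>{1..n}. G k (xh k)) = G j (xh j) + (\<Sum>k\<in>{1..n}-{j}. G k (xh k))"
      using j by (simp add: sum.remove)
    moreover have "(\<Sum>k\<in>{1..n}. G k ((xh(j:=b)) k)) = G j b + (\<Sum>k\<in>{1..n}-{j}. G k (xh k))"
      using j by (simp add: sum.remove)
    ultimately show ?thesis by linarith
  qed
  have each: "(xh j - x0 j)\<^sup>2 \<le> (2*c*C) powr (2-p) * eps powr (2-p) * (real j powr (p * (s + 1/2 - 1/p)) * \<bar>x0 j\<bar> powr p)"
    if j: "j \<in> {1..n}" for j
  proof -
    define tau where "tau = c / lam j * eps"
    have lj: "lam j > 0" using lam_pos[OF j] .
    have tau0: "tau \<ge> 0" unfolding tau_def using lj cp eps0 by simp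
    have Ej: "\<bar>E j\<bar> \<le> tau"
    proof -
      have "\<bar>E j\<bar> = \<bar>(\<Sum>i\<in>{1..n}. phi j (dsg n i) * ep i) / real n\<bar> / lam j"
        unfolding E_def using lj by (simp add: abs_divide mult.commute)
      also have "\<dots> \<le> c * eps / lam j"
        using divide_right_mono[OF noise[OF j], of "lam j"] lj unfolding eps_def by simp
      finally show ?thesis unfolding tau_def by simp
    qed
    have mu: "mu_w c n (lam j) = 2 * tau" unfolding mu_w_def tau_def eps_def by simp
    have "\<bar>xh j - x0 j\<bar> \<le> \<bar>x0 j\<bar> \<and> \<bar>xh j - x0 j\<bar> \<le> 2*tau"
    proof (rule soft[OF tau0 Ej])
      fix b
      show "(x0 j + E j - xh j)\<^sup>2 + 2 * tau * \<bar>xh j\<bar> \<le> (x0 j + E j - b)\<^sup>2 + 2 * tau * \<bar>b\<bar>"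
        using opt[OF j, of b] unfolding G_def mu by (simp add: algebra_simps)
    qed
    then have t1: "(xh j - x0 j)\<^sup>2 \<le> \<bar>x0 j\<bar> powr p * (2*tau) powr (2-p)"
      using term_bound p0 p2 by blast
    have jpos: "real j > 0" using j by simp
    have inv: "1 / lam j \<le> C * real j powr t"
    proof -
      have "real j powr (-t) / C \<le> lam j" using lam_lb[OF j] .
      then have "real j powr (-t) \<le> C * lam j" using Cp by (simp add: divide_le_eq mult.commute)
      then have "1 / (C * lam j) \<le> 1 / real j powr (-t)"
        using jpos Cp lj by (intro divide_left_mono) auto
      then have "1 / (C * lam j) \<le> real j powr t" by (simp add: powr_minus_divide)
      then show ?thesis using Cp lj by (simp add: field_simps)
    qed
    have "2 * tau \<le> 2*c*C*eps * real j powr t"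
    proof -
      have "2 * tau = 2*c*eps * (1 / lam j)" unfolding tau_def by simp
      also have "\<dots> \<le> 2*c*eps * (C * real j powr t)"
        using inv cp eps0 by (intro mult_left_mono) auto
      finally show ?thesis by (simp add: algebra_simps)
    qed
    then have "(2*tau) powr (2-p) \<le> (2*c*C*eps * real j powr t) powr (2-p)"
      using tau0 p2 by (intro powr_mono2) auto
    also have "\<dots> = (2*c*C) powr (2-p) * eps powr (2-p) * real j powr (t * (2-p))"
      using cp Cp eps0 by (simp add: powr_mult powr_powr)
    also have "\<dots> = (2*c*C) powr (2-p) * eps powr (2-p) * real j powr (p * (s + 1/2 - 1/p))"
      using ex by simp
    finally have "(2*tau) powr (2-p) \<le> \<dots>" .
    then have "\<bar>x0 j\<bar> powr p * (2*tau) powr (2-p) \<le> \<bar>x0 j\<bar> powr p * ((2*c*C) powr (2-p) * eps powr (2-p) * real j powr (p * (s + 1/2 - 1/p)))"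
      by (intro mult_left_mono) auto
    with t1 show ?thesis by (simp add: algebra_simps)
  qed
  have "emp_norm2 dsg n (\<lambda>z. expand n xh psi z - expand n x0 psi z) = (\<Sum>j\<in>{1..n}. (xh j - x0 j)\<^sup>2)"
    by (rule norm_comp[OF psi_on])
  also have "\<dots> \<le> (\<Sum>j\<in>{1..n}. (2*c*C) powr (2-p) * eps powr (2-p) * (real j powr (p * (s + 1/2 - 1/p)) * \<bar>x0 j\<bar> powr p))"
    by (rule sum_mono) (rule each)
  also have "\<dots> = (2*c*C) powr (2-p) * eps powr (2-p) * (\<Sum>j\<in>{1..n}. real j powr (p * (s + 1/2 - 1/p)) * \<bar>x0 j\<bar> powr p)"
    by (simp add: sum_distrib_left)
  also have "\<dots> \<le> (2*c*C) powr (2-p) * eps powr (2-p) * 1"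
    using X unfolding in_Xsp_def by (intro mult_left_mono) auto
  finally show ?thesis unfolding eps_def by simp
qed

theorem theorem2:
  fixes M :: "'w measure"
    and F :: "(real \<Rightarrow> real) \<Rightarrow> (real \<Rightarrow> real)"
    and dsg :: "nat \<Rightarrow> nat \<Rightarrow> real"
    and eps :: "nat \<Rightarrow> 'w \<Rightarrow> real"
    and phi psi :: "nat \<Rightarrow> nat \<Rightarrow> real \<Rightarrow> real"
    and lam :: "nat \<Rightarrow> nat \<Rightarrow> real"
    and x0c :: "nat \<Rightarrow> nat \<Rightarrow> real"
    and xhat :: "nat \<Rightarrow> 'w \<Rightarrow> nat \<Rightarrow> real"
    and t s p c K :: real
  assumes P: "prob_space M"
    (* F linear *)
    and F_lin: "\<And>a b u v. F (\<lambda>z. a * u z + b * v z) = (\<lambda>z. a * F u z + b * F v z)"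
    (* errors *)
    and eps_rv: "\<And>i. eps i \<in> borel_measurable M"
    and eps_indep: "\<And>n. prob_space.indep_vars M (\<lambda>_. borel) eps {1..n}"
    and eps_mean: "\<And>i. i \<ge> 1 \<Longrightarrow> integrable M (eps i) \<and> (\<integral>\<omega>. eps i \<omega> \<partial>M) = 0"
    and eps_var: "\<And>i. i \<ge> 1 \<Longrightarrow> integrable M (\<lambda>\<omega>. (eps i \<omega>)\<^sup>2)"
    and K_pos: "K > 0"
    and eps_orlicz: "\<And>i. i \<ge> 1 \<Longrightarrow>
          integrable M (\<lambda>\<omega>. exp ((eps i \<omega>)\<^sup>2 / K\<^sup>2)) \<and>
          (\<integral>\<omega>. exp ((eps i \<omega>)\<^sup>2 / K\<^sup>2) \<partial>M) \<le> K"
    (* singular system for each n *)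
    and lam_pos: "\<And>n j. 1 \<le> j \<Longrightarrow> j \<le> n \<Longrightarrow> lam n j > 0"
    and lam_decr: "\<And>n j. 1 \<le> j \<Longrightarrow> j < n \<Longrightarrow> lam n (Suc j) \<le> lam n j"
    and F_psi: "\<And>n j. 1 \<le> j \<Longrightarrow> j \<le> n \<Longrightarrow> F (psi n j) = (\<lambda>z. lam n j * phi n j z)"
    and psi_on: "\<And>n j k. j \<in> {1..n} \<Longrightarrow> k \<in> {1..n} \<Longrightarrow>
          emp_inner dsg n (psi n j) (psi n k) = (if j = k then 1 else 0)"
    and phi_on: "\<And>n j k. j \<in> {1..n} \<Longrightarrow> k \<in> {1..n} \<Longrightarrow>
          emp_inner dsg n (phi n j) (phi n k) = (if j = k then 1 else 0)"
    (* index of ill-posedness t *)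
    and t_pos: "t > 0"
    and ill_posed: "\<exists>C>0. \<forall>n j. 1 \<le> j \<and> j \<le> n \<longrightarrow>
          real j powr (-t) / C \<le> lam n j \<and> lam n j \<le> C * real j powr (-t)"
    (* the constant c *)
    and c_pos: "c > 0"
    and c_bound: "\<And>n. n \<ge> 2 \<Longrightarrow>
          prob_space.prob M {\<omega> \<in> space M.
             (MAX j\<in>{1..n}. \<bar>(\<Sum>i\<in>{1..n}. phi n j (dsg n i) * eps i \<omega>) / real n\<bar>)
               > c * sqrt (ln (real n) / real n)}
          \<le> c * exp (- ln (real n) / c\<^sup>2)"
    (* the estimator: a minimiser of the criterion for the data y_i = F(x_0)(t_i) + eps_i *)
    and xhat_min: "\<And>n \<omega> a. n \<ge> 1 \<Longrightarrow> \<omega> \<in> space M \<Longrightarrow>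
          crit F dsg n (phi n) (psi n) (lam n) c
               (\<lambda>i. F (expand n (x0c n) (psi n)) (dsg n i) + eps i \<omega>) (xhat n \<omega>)
          \<le> crit F dsg n (phi n) (psi n) (lam n) c
               (\<lambda>i. F (expand n (x0c n) (psi n)) (dsg n i) + eps i \<omega>) a"
    (* smoothness *)
    and p_pos: "0 < p" and p_lt2: "p < 2"
    and sp: "1 / p = 1/2 + s / (2 * t + 1)"
    and x0_class: "\<And>n. in_Xsp s p n (x0c n)"
  shows "\<forall>\<delta>>0. \<exists>B>0. \<exists>N. \<forall>n\<ge>N.
           prob_space.prob M {\<omega> \<in> space M.
              emp_norm2 dsg n (\<lambda>z. expand n (xhat n \<omega>) (psi n) z - expand n (x0c n) (psi n) z)
                > B * (real n / ln (real n)) powr (- (2 * s) / (2 * s + 2 * t + 1))}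
           \<le> \<delta>"
proof (intro allI impI)
  fix \<delta> :: real assume dpos: "\<delta> > 0"
  interpret prob_space M by (rule P)
  from ill_posed obtain C where Cp: "C > 0" and lb: "\<And>n j. 1 \<le> j \<Longrightarrow> j \<le> n \<Longrightarrow>
          real j powr (-t) / C \<le> lam n j" by blast
  define D where "D = 2 * s + 2 * t + 1"
  have key: "2 * (2 * t + 1) = p * (2 * t + 1) + 2 * p * s"
  proof -
    have "2 * t + 1 > 0" using t_pos by simp
    then show ?thesis using sp p_pos by (simp add: field_simps)
  qed
  have ex: "t * (2 - p) = p * (s + 1/2 - 1/p)"
  proof -
    have a1: "p * (s + 1/2 - 1/p) = p * s + p / 2 - 1" using p_pos by (simp add: field_simps)
    have a2: "t * (2 - p) = 2 * t - t * p" by (simp add: algebra_simps)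
    have a3: "2 * (2 * t + 1) = p * (2 * t + 1) + 2 * p * s" by (rule key)
    then have "4 * t + 2 = 2 * (t * p) + p + 2 * (p * s)" by (simp add: algebra_simps)
    then show ?thesis unfolding a1 a2 by linarith
  qed
  have spos: "s > 0"
  proof -
    have "2 * p * s = (2 - p) * (2 * t + 1)" using key by (simp add: algebra_simps)
    moreover have "(2 - p) * (2 * t + 1) > 0" using p_lt2 t_pos by simp
    ultimately have "p * s > 0" by simp
    then show ?thesis using p_pos by (simp add: zero_less_mult_iff)
  qed
  have Dpos: "D > 0" unfolding D_def using spos t_pos by simp
  have expo: "(2 - p) / 2 = 2 * s / D"
  proof -
    have "(2 - p) * D = 4 * s" unfolding D_def using key by (simp add: algebra_simps)
    then show ?thesis using Dpos by (simp add: field_simps)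
  qed
  define B where "B = (2*c*C) powr (2-p)"
  have Bpos: "B > 0" unfolding B_def using c_pos Cp by simp
  define L where "L = ln (\<delta> / c)"
  define N where "N = nat \<lceil>exp (c\<^sup>2 * \<bar>L\<bar>)\<rceil> + 2"
  show "\<exists>B>0. \<exists>N. \<forall>n\<ge>N.
           prob {\<omega> \<in> space M.
              emp_norm2 dsg n (\<lambda>z. expand n (xhat n \<omega>) (psi n) z - expand n (x0c n) (psi n) z)
                > B * (real n / ln (real n)) powr (- (2 * s) / (2 * s + 2 * t + 1))}
           \<le> \<delta>"
  proof (intro exI[of _ B] conjI exI[of _ N] allI impI Bpos)
    fix n assume nN: "n \<ge> N"
    have n2: "n \<ge> 2" using nN unfolding N_def by simp
    have lnpos: "ln (real n) > 0" using n2 by simp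
    have rate: "sqrt (ln (real n) / real n) powr (2-p) = (real n / ln (real n)) powr (- (2 * s) / (2 * s + 2 * t + 1))"
    proof -
      have "sqrt (ln (real n) / real n) powr (2-p) = ((ln (real n) / real n) powr (1/2)) powr (2-p)"
        using lnpos by (simp add: powr_half_sqrt)
      also have "\<dots> = (ln (real n) / real n) powr ((2-p)/2)" by (simp add: powr_powr)
      also have "\<dots> = (ln (real n) / real n) powr (2 * s / D)" using expo by simp
      also have "\<dots> = (real n / ln (real n)) powr (- (2 * s / D))"
        using lnpos n2 by (simp add: powr_minus_divide powr_divide)
      finally show ?thesis unfolding D_def by simp
    qed
    define Ebad where "Ebad = {\<omega> \<in> space M.
             (MAX j\<in>{1..n}. \<bar>(\<Sum>i\<in>{1..n}. phi n j (dsg n i) * eps i \<omega>) / real n\<bar>)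
               > c * sqrt (ln (real n) / real n)}"
    have Emeas: "Ebad \<in> sets M"
      unfolding Ebad_def using eps_rv by measurable
    have sub: "{\<omega> \<in> space M.
              emp_norm2 dsg n (\<lambda>z. expand n (xhat n \<omega>) (psi n) z - expand n (x0c n) (psi n) z)
                > B * (real n / ln (real n)) powr (- (2 * s) / (2 * s + 2 * t + 1))} \<subseteq> Ebad"
    proof (rule subsetI, rule ccontr)
      fix \<omega> assume w: "\<omega> \<in> {\<omega> \<in> space M.
              emp_norm2 dsg n (\<lambda>z. expand n (xhat n \<omega>) (psi n) z - expand n (x0c n) (psi n) z)
                > B * (real n / ln (real n)) powr (- (2 * s) / (2 * s + 2 * t + 1))}"
        and nb: "\<omega> \<notin> Ebad"
      have ws: "\<omega> \<in> space M" using w by simp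
      have mx: "(MAX j\<in>{1..n}. \<bar>(\<Sum>i\<in>{1..n}. phi n j (dsg n i) * eps i \<omega>) / real n\<bar>)
               \<le> c * sqrt (ln (real n) / real n)" using nb ws unfolding Ebad_def by auto
      have noise: "\<bar>(\<Sum>i\<in>{1..n}. phi n j (dsg n i) * eps i \<omega>) / real n\<bar> \<le> c * sqrt (ln (real n) / real n)"
        if j: "j \<in> {1..n}" for j
        using order_trans[OF Max_ge mx] j by auto
      have "emp_norm2 dsg n (\<lambda>z. expand n (xhat n \<omega>) (psi n) z - expand n (x0c n) (psi n) z)
           \<le> (2*c*C) powr (2-p) * sqrt (ln (real n) / real n) powr (2-p)"
      proof (rule det_bound[where F=F and phi="phi n" and psi="psi n" and lam="lam n" and ep="\<lambda>i. eps i \<omega>"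
            and c=c and C=C and t=t and s=s and p=p])
        show "\<And>a b u v. F (\<lambda>z. a * u z + b * v z) = (\<lambda>z. a * F u z + b * F v z)" by (rule F_lin)
        show "\<And>j. j \<in> {1..n} \<Longrightarrow> F (psi n j) = (\<lambda>z. lam n j * phi n j z)" using F_psi by auto
        show "\<And>j k. j \<in> {1..n} \<Longrightarrow> k \<in> {1..n} \<Longrightarrow>
          emp_inner dsg n (phi n j) (phi n k) = (if j = k then 1 else 0)" by (rule phi_on)
        show "\<And>j k. j \<in> {1..n} \<Longrightarrow> k \<in> {1..n} \<Longrightarrow>
          emp_inner dsg n (psi n j) (psi n k) = (if j = k then 1 else 0)" by (rule psi_on)
        show "\<And>j. j \<in> {1..n} \<Longrightarrow> lam n j > 0" using lam_pos by auto
        show "\<And>j. j \<in> {1..n} \<Longrightarrow> real j powr (-t) / C \<le> lam n j" using lb by auto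
        show "C > 0" "c > 0" "n \<ge> 2" by (fact Cp, fact c_pos, fact n2)
        show "\<And>j. j \<in> {1..n} \<Longrightarrow> \<bar>(\<Sum>i\<in>{1..n}. phi n j (dsg n i) * eps i \<omega>) / real n\<bar> \<le> c * sqrt (ln (real n) / real n)"
          by (rule noise)
        show "\<And>a. crit F dsg n (phi n) (psi n) (lam n) c (\<lambda>i. F (expand n (x0c n) (psi n)) (dsg n i) + eps i \<omega>) (xhat n \<omega>)
              \<le> crit F dsg n (phi n) (psi n) (lam n) c (\<lambda>i. F (expand n (x0c n) (psi n)) (dsg n i) + eps i \<omega>) a"
          using xhat_min n2 ws by simp
        show "t * (2 - p) = p * (s + 1/2 - 1/p)" by (rule ex)
        show "0 < p" "p < 2" by (fact p_pos, fact p_lt2)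
        show "in_Xsp s p n (x0c n)" by (rule x0_class)
      qed
      then have "emp_norm2 dsg n (\<lambda>z. expand n (xhat n \<omega>) (psi n) z - expand n (x0c n) (psi n) z)
           \<le> B * (real n / ln (real n)) powr (- (2 * s) / (2 * s + 2 * t + 1))"
        unfolding B_def rate .
      with w show False by simp
    qed
    have "prob {\<omega> \<in> space M.
              emp_norm2 dsg n (\<lambda>z. expand n (xhat n \<omega>) (psi n) z - expand n (x0c n) (psi n) z)
                > B * (real n / ln (real n)) powr (- (2 * s) / (2 * s + 2 * t + 1))} \<le> prob Ebad"
      by (rule finite_measure_mono[OF sub Emeas])
    also have "\<dots> \<le> c * exp (- ln (real n) / c\<^sup>2)" unfolding Ebad_def by (rule c_bound[OF n2])
    also have "\<dots> \<le> \<delta>"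
    proof -
      have "real n \<ge> exp (c\<^sup>2 * \<bar>L\<bar>)" using nN unfolding N_def by linarith
      then have "ln (real n) \<ge> c\<^sup>2 * \<bar>L\<bar>"
        using ln_le_cancel_iff[of "exp (c\<^sup>2 * \<bar>L\<bar>)" "real n"] n2 by simp
      then have "ln (real n) / c\<^sup>2 \<ge> \<bar>L\<bar>" using c_pos by (simp add: field_simps)
      then have "- ln (real n) / c\<^sup>2 \<le> L" by linarith
      then have "exp (- ln (real n) / c\<^sup>2) \<le> exp L" by simp
      also have "exp L = \<delta> / c" unfolding L_def using dpos c_pos by simp
      finally show ?thesis using c_pos by (simp add: field_simps)
    qed
    finally show "prob {\<omega> \<in> space M.
              emp_norm2 dsg n (\<lambda>z. expand n (xhat n \<omega>) (psi n) z - expand n (x0c n) (psi n) z)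
                > B * (real n / ln (real n)) powr (- (2 * s) / (2 * s + 2 * t + 1))} \<le> \<delta>" .
  qed
qed
end
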